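(* Let ${\bf Y}$, $d^\pi_Y$, $\xi$ satisfy axioms (1)–(4) and let $d_Y$ be the modified functions defined below. There exist constants ${\boldsymbol\xi}>0$ and $c>0$, depending only on $\xi$, such that for all elements of ${\bf Y}$ (pairwise distinct whenever the quantities require it): (A) $d_Y(X,Z)=d_Y(Z,X)$; (B) $d^\pi_Y(X,Z)-c\le d_Y(X,Z)\le d^\pi_Y(X,Z)$; (C) $d_Y(X,Z)+d_Y(Z,W)\ge d_Y(X,W)-c$; (D) $\min\{d_Y(X,Z),d_Z(X,Y)\}\le c$; (E) for all $X,Z$ the set $\{Y: d_Y(X,Z)\ge{\boldsymbol\xi}\}$ is finite; (F) (monotonicity) if $d_Y(X,Z)\ge{\boldsymbol\xi}$ then $d_W(X,Y)\le d_W(X,Z)$ and $d_W(Z,Y)\le d_W(X,Z)$; (G) (order) the set ${\bf Y}_{\boldsymbol\xi}(X,Z)\cup\{X,Z\}$ carries a total order with least element $X$ and greatest element $Z$ such that, for $Y_0,Y_1,Y_2$ in this set with $Y_1\notin\{X,Z\}$ distinct from $Y_0,Y_2$: if $Y_1$ is between $Y_0$ and $Y_2$ then $d_{Y_1}(X,Z)-c\le d_{Y_1}(Y_0,Y_2)\le d_{Y_1}(X,Z)$, and if not then $d_{Y_1}(Y_0,Y_2)\le c$; (H) (barrier property) if $Y\in{\bf Y}_{\boldsymbol\xi}(X_0,Z)$ and $Y\in{\bf Y}_{\boldsymbol\xi}(X_1,Z)$ then $d_Z(X_0,X_1)<{\boldsymbol\xi}$.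
   Context: Axioms: ${\bf Y}$ is a set, for each $Y\in{\bf Y}$, $d^\pi_Y:({\bf Y}\setminus\{Y\})^2\to[0,\infty)$, and $\xi>0$, with (1) $d^\pi_Y(X,Z)=d^\pi_Y(Z,X)$; (2) $d^\pi_Y(X,Z)+d^\pi_Y(Z,W)\ge d^\pi_Y(X,W)$; (3) for pairwise distinct $X,Y,Z$, $\min\{d^\pi_Y(X,Z),d^\pi_Z(X,Y)\}<\xi$; (4) for all $X,Z$ the set $\{Y:d^\pi_Y(X,Z)\ge\xi\}$ is finite. Let $\mathcal H(X,Z)$ be the set of pairs $(X',Z')$ such that either $d^\pi_X(X',Z')>2\xi$ and $d^\pi_Z(X',Z')>2\xi$; or $X'=X$ and $d^\pi_Z(X,Z')>2\xi$; or $Z'=Z$ and $d^\pi_X(X',Z)>2\xi$; or $(X',Z')=(X,Z)$. Define $d_Y(X,Z)=\inf_{(X',Z')\in\mathcal H(X,Z)}d^\pi_Y(X',Z')$. For $K>0$, ${\bf Y}_K(X,Z)$ denotes the set of $Y\in{\bf Y}\setminus\{X,Z\}$ with $d_Y(X,Z)>K$. *)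

theory Defs
  imports Complex_Main
begin

definition proj_axioms :: "'a set \<Rightarrow> ('a \<Rightarrow> 'a \<Rightarrow> 'a \<Rightarrow> real) \<Rightarrow> real \<Rightarrow> bool" where
  "proj_axioms Ys dpi xi \<longleftrightarrow>
     xi > 0 \<and>
     (\<forall>Y\<in>Ys. \<forall>X\<in>Ys - {Y}. \<forall>Z\<in>Ys - {Y}. 0 \<le> dpi Y X Z) \<and>
     (\<forall>Y\<in>Ys. \<forall>X\<in>Ys - {Y}. \<forall>Z\<in>Ys - {Y}. dpi Y X Z = dpi Y Z X) \<and>
     (\<forall>Y\<in>Ys. \<forall>X\<in>Ys - {Y}. \<forall>Z\<in>Ys - {Y}. \<forall>W\<in>Ys - {Y}.
        dpi Y X Z + dpi Y Z W \<ge> dpi Y X W) \<and>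
     (\<forall>X\<in>Ys. \<forall>Y\<in>Ys. \<forall>Z\<in>Ys. X \<noteq> Y \<and> Y \<noteq> Z \<and> X \<noteq> Z \<longrightarrow>
        min (dpi Y X Z) (dpi Z X Y) < xi) \<and>
     (\<forall>X\<in>Ys. \<forall>Z\<in>Ys. finite {Y \<in> Ys - {X, Z}. dpi Y X Z \<ge> xi})"

text \<open>The set H(X,Z) of admissible replacement pairs (each projection appearing
  is required to be defined, i.e. its arguments differ from its index).\<close>

definition Hpairs :: "'a set \<Rightarrow> ('a \<Rightarrow> 'a \<Rightarrow> 'a \<Rightarrow> real) \<Rightarrow> real \<Rightarrow> 'a \<Rightarrow> 'a \<Rightarrow> ('a \<times> 'a) set" where
  "Hpairs Ys dpi xi X Z = {(X', Z'). X' \<in> Ys \<and> Z' \<in> Ys \<and>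
     ((X' \<noteq> X \<and> Z' \<noteq> X \<and> X' \<noteq> Z \<and> Z' \<noteq> Z \<and>
        dpi X X' Z' > 2 * xi \<and> dpi Z X' Z' > 2 * xi) \<or>
      (X' = X \<and> X \<noteq> Z \<and> Z' \<noteq> Z \<and> dpi Z X Z' > 2 * xi) \<or>
      (Z' = Z \<and> X \<noteq> Z \<and> X' \<noteq> X \<and> dpi X X' Z > 2 * xi) \<or>
      (X' = X \<and> Z' = Z))}"

definition dmod :: "'a set \<Rightarrow> ('a \<Rightarrow> 'a \<Rightarrow> 'a \<Rightarrow> real) \<Rightarrow> real \<Rightarrow> 'a \<Rightarrow> 'a \<Rightarrow> 'a \<Rightarrow> real" where
  "dmod Ys dpi xi Y X Z =
     Inf {dpi Y X' Z' | X' Z'. (X', Z') \<in> Hpairs Ys dpi xi X Z \<and> X' \<noteq> Y \<and> Z' \<noteq> Y}"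

definition Yset :: "'a set \<Rightarrow> ('a \<Rightarrow> 'a \<Rightarrow> 'a \<Rightarrow> real) \<Rightarrow> real \<Rightarrow> real \<Rightarrow> 'a \<Rightarrow> 'a \<Rightarrow> 'a set" where
  "Yset Ys dpi xi K X Z = {Y \<in> Ys - {X, Z}. dmod Ys dpi xi Y X Z > K}"

end

theory Submission
  imports Defs
begin


locale PA =
  fixes Ys :: "'a set" and dpi :: "'a \<Rightarrow> 'a \<Rightarrow> 'a \<Rightarrow> real" and xi :: real
  assumes ax: "proj_axioms Ys dpi xi"
begin

abbreviation "d \<equiv> dmod Ys dpi xi"
abbreviation "H \<equiv> Hpairs Ys dpi xi"

lemma xi_pos: "xi > 0" using ax by (simp add: proj_axioms_def)

lemma nonneg: "Y \<in> Ys \<Longrightarrow> X \<in> Ys \<Longrightarrow> Z \<in> Ys \<Longrightarrow> X \<noteq> Y \<Longrightarrow> Z \<noteq> Y \<Longrightarrow> 0 \<le> dpi Y X Z"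
  using ax by (simp add: proj_axioms_def)

lemma sym: "Y \<in> Ys \<Longrightarrow> X \<in> Ys \<Longrightarrow> Z \<in> Ys \<Longrightarrow> X \<noteq> Y \<Longrightarrow> Z \<noteq> Y \<Longrightarrow> dpi Y X Z = dpi Y Z X"
  using ax by (simp add: proj_axioms_def)

lemma tri: "Y \<in> Ys \<Longrightarrow> X \<in> Ys \<Longrightarrow> Z \<in> Ys \<Longrightarrow> W \<in> Ys \<Longrightarrow> X \<noteq> Y \<Longrightarrow> Z \<noteq> Y \<Longrightarrow> W \<noteq> Y
  \<Longrightarrow> dpi Y X W \<le> dpi Y X Z + dpi Y Z W"
  using ax unfolding proj_axioms_def by blast

lemma beh: "X \<in> Ys \<Longrightarrow> Y \<in> Ys \<Longrightarrow> Z \<in> Ys \<Longrightarrow> X \<noteq> Y \<Longrightarrow> Y \<noteq> Z \<Longrightarrow> X \<noteq> Z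
  \<Longrightarrow> dpi Y X Z < xi \<or> dpi Z X Y < xi"
  using ax unfolding proj_axioms_def by force

lemma fin: "X \<in> Ys \<Longrightarrow> Z \<in> Ys \<Longrightarrow> finite {Y \<in> Ys - {X, Z}. dpi Y X Z \<ge> xi}"
  using ax unfolding proj_axioms_def by blast

lemma Hmem: "(a,b) \<in> H X Z \<longleftrightarrow> a \<in> Ys \<and> b \<in> Ys \<and>
     ((a \<noteq> X \<and> b \<noteq> X \<and> a \<noteq> Z \<and> b \<noteq> Z \<and>
        dpi X a b > 2 * xi \<and> dpi Z a b > 2 * xi) \<or>
      (a = X \<and> X \<noteq> Z \<and> b \<noteq> Z \<and> dpi Z X b > 2 * xi) \<or>
      (b = Z \<and> X \<noteq> Z \<and> a \<noteq> X \<and> dpi X a Z > 2 * xi) \<or>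
      (a = X \<and> b = Z))"
  by (simp add: Hpairs_def)

lemma d_le_pair:
  assumes "(a,b) \<in> H X Z" "a \<noteq> Y" "b \<noteq> Y" "Y \<in> Ys"
  shows "d Y X Z \<le> dpi Y a b"
proof -
  have ab: "a \<in> Ys" "b \<in> Ys" using assms(1) Hmem by auto
  show ?thesis unfolding dmod_def
    apply (rule cInf_lower)
    using assms apply blast
    unfolding bdd_below_def using nonneg[OF assms(4)] ab
    by (smt (verit) Hmem mem_Collect_eq)
qed

lemma d_ge:
  assumes "Y \<in> Ys" "X \<in> Ys" "Z \<in> Ys" "Y \<noteq> X" "Y \<noteq> Z"
    and "\<And>a b. (a,b) \<in> H X Z \<Longrightarrow> a \<noteq> Y \<Longrightarrow> b \<noteq> Y \<Longrightarrow> m \<le> dpi Y a b"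
  shows "m \<le> d Y X Z"
  unfolding dmod_def
proof (rule cInf_greatest)
  have "(X,Z) \<in> H X Z" using assms Hmem by auto
  then show "{dpi Y X' Z' |X' Z'. (X', Z') \<in> H X Z \<and> X' \<noteq> Y \<and> Z' \<noteq> Y} \<noteq> {}"
    using assms by blast
qed (use assms(6) in blast)

lemma d_le: "Y \<in> Ys \<Longrightarrow> X \<in> Ys \<Longrightarrow> Z \<in> Ys \<Longrightarrow> Y \<noteq> X \<Longrightarrow> Y \<noteq> Z \<Longrightarrow> d Y X Z \<le> dpi Y X Z"
  by (rule d_le_pair) (auto simp: Hmem)

lemma d_nonneg: "Y \<in> Ys \<Longrightarrow> X \<in> Ys \<Longrightarrow> Z \<in> Ys \<Longrightarrow> Y \<noteq> X \<Longrightarrow> Y \<noteq> Z \<Longrightarrow> 0 \<le> d Y X Z"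
  by (rule d_ge) (auto simp: Hmem nonneg)


lemma near:
  assumes "X \<in> Ys" "a \<in> Ys" "b \<in> Ys" "Y \<in> Ys" "a \<noteq> X" "b \<noteq> X" "dpi X a b > 2*xi"
    "Y \<noteq> X" "Y \<noteq> a" "Y \<noteq> b"
  shows "dpi Y X a < xi \<or> dpi Y X b < xi"
proof -
  have "dpi X a b \<le> dpi X a Y + dpi X Y b" using tri[of X a Y b] assms by blast
  then have "dpi X a Y > xi \<or> dpi X Y b > xi" using assms(7) by linarith
  moreover have "dpi Y a X < xi \<or> dpi X a Y < xi" using beh[of a Y X] assms by auto
  moreover have "dpi Y b X < xi \<or> dpi X b Y < xi" using beh[of b Y X] assms by auto
  moreover have "dpi Y a X = dpi Y X a" "dpi Y b X = dpi Y X b" "dpi X b Y = dpi X Y b"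
    using sym[of Y a X] sym[of Y b X] sym[of X b Y] assms by auto
  ultimately show ?thesis by linarith
qed

lemma Bpair:
  assumes "Y \<in> Ys" "X \<in> Ys" "Z \<in> Ys" "Y \<noteq> X" "Y \<noteq> Z" "(a,b) \<in> H X Z" "a \<noteq> Y" "b \<noteq> Y"
  shows "dpi Y X Z \<le> dpi Y a b + 2*xi"
proof -
  have ab: "a \<in> Ys" "b \<in> Ys" using assms(6) Hmem by auto
  have xi: "xi > 0" by (rule xi_pos)
  have T: "\<And>P Q R. P \<in> Ys \<Longrightarrow> Q \<in> Ys \<Longrightarrow> R \<in> Ys \<Longrightarrow> P \<noteq> Y \<Longrightarrow> Q \<noteq> Y \<Longrightarrow> R \<noteq> Y \<Longrightarrow>
     dpi Y P R \<le> dpi Y P Q + dpi Y Q R" by (rule tri[OF assms(1)])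
  have S: "\<And>P Q. P \<in> Ys \<Longrightarrow> Q \<in> Ys \<Longrightarrow> P \<noteq> Y \<Longrightarrow> Q \<noteq> Y \<Longrightarrow> dpi Y P Q = dpi Y Q P"
    by (rule sym[OF assms(1)])
  have N: "\<And>P Q. P \<in> Ys \<Longrightarrow> Q \<in> Ys \<Longrightarrow> P \<noteq> Y \<Longrightarrow> Q \<noteq> Y \<Longrightarrow> 0 \<le> dpi Y P Q"
    by (rule nonneg[OF assms(1)])
  have ne: "X \<noteq> Y" "Z \<noteq> Y" "a \<noteq> Y" "b \<noteq> Y" using assms(4,5,7,8) by auto
  note mem = ab assms(2,3)
  have t1: "dpi Y X Z \<le> dpi Y X a + dpi Y a Z" "dpi Y X Z \<le> dpi Y X b + dpi Y b Z"
    "dpi Y a Z \<le> dpi Y a b + dpi Y b Z" "dpi Y b Z \<le> dpi Y b a + dpi Y a Z"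
    "dpi Y X b \<le> dpi Y X a + dpi Y a b" "dpi Y X a \<le> dpi Y X b + dpi Y b a"
    using T[OF _ _ _ ne(1) ne(3) ne(2)] T[OF _ _ _ ne(1) ne(4) ne(2)]
      T[OF _ _ _ ne(3) ne(4) ne(2)] T[OF _ _ _ ne(4) ne(3) ne(2)]
      T[OF _ _ _ ne(1) ne(3) ne(4)] T[OF _ _ _ ne(1) ne(4) ne(3)] mem by blast+
  have s1: "dpi Y Z a = dpi Y a Z" "dpi Y Z b = dpi Y b Z" "dpi Y b a = dpi Y a b"
    "0 \<le> dpi Y a b"
    using S[OF _ _ ne(2) ne(3)] S[OF _ _ ne(2) ne(4)] S[OF _ _ ne(4) ne(3)] N[OF _ _ ne(3) ne(4)] mem by blast+
  consider (c1) "a \<noteq> X" "b \<noteq> X" "a \<noteq> Z" "b \<noteq> Z" "dpi X a b > 2 * xi" "dpi Z a b > 2 * xi"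
    | (c2) "a = X" "X \<noteq> Z" "b \<noteq> Z" "dpi Z X b > 2 * xi"
    | (c3) "b = Z" "X \<noteq> Z" "a \<noteq> X" "dpi X a Z > 2 * xi"
    | (c4) "a = X" "b = Z" using assms(6) unfolding Hmem by argo
  then show ?thesis
  proof cases
    case c1
    have 1: "dpi Y X a < xi \<or> dpi Y X b < xi" using near[of X a b Y] c1 assms ab by blast
    have 2: "dpi Y Z a < xi \<or> dpi Y Z b < xi" using near[of Z a b Y] c1 assms ab by blast
    show ?thesis using 1 2 t1 s1 by linarith
  next
    case c2
    have 2: "dpi Y Z a < xi \<or> dpi Y Z b < xi" using near[of Z a b Y] c2 assms ab by blast
    have "dpi Y a a \<le> dpi Y a Z + dpi Y Z a" using T[OF _ _ _ ne(3) ne(2) ne(3)] mem by blast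
    then show ?thesis using 2 t1 s1 c2 xi by auto
  next
    case c3
    have 1: "dpi Y X a < xi \<or> dpi Y X b < xi" using near[of X a b Y] c3 assms ab by blast
    have "dpi Y b b \<le> dpi Y b X + dpi Y X b" using T[OF _ _ _ ne(4) ne(1) ne(4)] mem by blast
    moreover have "dpi Y b X = dpi Y X b" using S[OF _ _ ne(4) ne(1)] mem by blast
    ultimately show ?thesis using 1 t1 s1 c3 xi by auto
  qed (use xi in simp)
qed

lemma B: "Y \<in> Ys \<Longrightarrow> X \<in> Ys \<Longrightarrow> Z \<in> Ys \<Longrightarrow> Y \<noteq> X \<Longrightarrow> Y \<noteq> Z \<Longrightarrow> dpi Y X Z - 2*xi \<le> d Y X Z"
  by (rule d_ge) (use Bpair in force)+

lemma Hswap: "(a,b) \<in> H X Z \<Longrightarrow> X \<in> Ys \<Longrightarrow> Z \<in> Ys \<Longrightarrow> (b,a) \<in> H Z X"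
  unfolding Hmem using sym[of X a b] sym[of Z a b] sym[of X a Z] sym[of Z X b] by auto

lemma dsym_le: assumes "Y \<in> Ys" "X \<in> Ys" "Z \<in> Ys" "Y \<noteq> X" "Y \<noteq> Z" shows "d Y Z X \<le> d Y X Z"
proof (rule d_ge[OF assms])
  fix a b assume "(a,b) \<in> H X Z" "a \<noteq> Y" "b \<noteq> Y"
  moreover from this have "(b,a) \<in> H Z X" "a \<in> Ys" "b \<in> Ys" using Hswap assms Hmem by blast+
  ultimately show "d Y Z X \<le> dpi Y a b" using d_le_pair[of b a Z X Y] sym assms by metis
qed

lemma dsym: "Y \<in> Ys \<Longrightarrow> X \<in> Ys \<Longrightarrow> Z \<in> Ys \<Longrightarrow> Y \<noteq> X \<Longrightarrow> Y \<noteq> Z \<Longrightarrow> d Y X Z = d Y Z X"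
  using dsym_le by (meson antisym)

definition good where "good X Z U \<longleftrightarrow> U \<in> Ys \<and> (U = X \<or> U = Z \<or> d U X Z > 2*xi)"

lemma good_prop: assumes "good X Z U" "(a,b) \<in> H X Z" shows "U = a \<or> U = b \<or> 2*xi < dpi U a b"
proof -
  consider "U = X" | "U = Z" | "U \<noteq> X" "U \<noteq> Z" "d U X Z > 2*xi" "U \<in> Ys" using assms(1) good_def by blast
  then show ?thesis
  proof cases
    case 1 then show ?thesis using assms(2) Hmem by auto
  next
    case 2 then show ?thesis using assms(2) Hmem by auto
  next
    case 3 then show ?thesis using d_le_pair[OF assms(2), of U] by force
  qed
qed

lemma transfer:
  assumes "A \<in> Ys" "B \<in> Ys" "A \<noteq> B" "a \<in> Ys" "b \<in> Ys"
    "A = a \<or> A = b \<or> 2*xi < dpi A a b" "B = a \<or> B = b \<or> 2*xi < dpi B a b"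
  shows "(a,b) \<in> H A B \<or> (b,a) \<in> H A B"
  using assms sym[of B a b] sym[of A a b] unfolding Hmem by auto

lemma mono:
  assumes "good X Z A" "good X Z B" "A \<noteq> B" "W \<in> Ys" "W \<noteq> A" "W \<noteq> B" "W \<noteq> X" "W \<noteq> Z"
    "X \<in> Ys" "Z \<in> Ys"
  shows "d W A B \<le> d W X Z"
proof (rule d_ge)
  fix a b assume h: "(a,b) \<in> H X Z" "a \<noteq> W" "b \<noteq> W"
  then have ab: "a \<in> Ys" "b \<in> Ys" using Hmem by auto
  have "(a,b) \<in> H A B \<or> (b,a) \<in> H A B"
    apply (rule transfer) using assms ab good_prop[OF _ h(1)] good_def by auto
  moreover have "dpi W b a = dpi W a b" using sym[of W a b] h ab assms by auto
  ultimately show "d W A B \<le> dpi W a b" using d_le_pair[of a b A B W] d_le_pair[of b a A B W] h ab assms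
    by auto
qed (use assms in auto)


lemma good_T: "U \<in> Yset Ys dpi xi (4*xi) X Z \<Longrightarrow> good X Z U"
  unfolding good_def Yset_def using xi_pos by auto

end

locale PAXZ = PA +
  fixes X Z
  assumes XY: "X \<in> Ys" and ZY: "Z \<in> Ys" and XZ: "X \<noteq> Z"
begin

abbreviation "T \<equiv> Yset Ys dpi xi (4*xi) X Z"
abbreviation "S \<equiv> T \<union> {X, Z}"
definition "prec U V \<longleftrightarrow> dpi U V Z < xi"
definition "R = {(U,V). U \<in> S \<and> V \<in> S \<and> (U = V \<or> U = X \<or> V = Z \<or> (U \<in> T \<and> V \<in> T \<and> prec U V))}"

lemma Tf: assumes "U \<in> T" shows "U \<in> Ys" "U \<noteq> X" "U \<noteq> Z" "dpi U X Z > 4*xi" "d U X Z > 4*xi"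
proof -
  show 1: "U \<in> Ys" "U \<noteq> X" "U \<noteq> Z" and 2: "d U X Z > 4*xi" using assms unfolding Yset_def by auto
  show "dpi U X Z > 4*xi" using d_le[OF 1(1) XY ZY] 1 2 by force
qed

lemma pa: assumes "U \<in> T" "V \<in> T" "U \<noteq> V" "prec V U" shows "dpi U X V < xi"
proof -
  note u = Tf[OF assms(1)] and v = Tf[OF assms(2)]
  have "dpi V X Z \<le> dpi V X U + dpi V U Z" using tri[of V X U Z] u v assms XY ZY by auto
  then have "dpi V X U > 3*xi" using assms(4) v(4) unfolding prec_def by linarith
  then show ?thesis using beh[of X U V] u v assms XY xi_pos by force
qed

lemma pb: assumes "U \<in> T" "V \<in> T" "U \<noteq> V" "\<not> prec V U" shows "prec U V"
proof -
  note u = Tf[OF assms(1)] and v = Tf[OF assms(2)]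
  have "dpi U Z V < xi \<or> dpi V Z U < xi" using beh[of Z U V] u v assms ZY by auto
  moreover have "dpi V Z U = dpi V U Z" "dpi U Z V = dpi U V Z"
    using sym[of V Z U] sym[of U Z V] u v assms ZY by auto
  ultimately show ?thesis using assms(4) unfolding prec_def by auto
qed

lemma pc: assumes "U \<in> T" "V \<in> T" "U \<noteq> V" "prec U V" "prec V U" shows False
proof -
  note u = Tf[OF assms(1)] and v = Tf[OF assms(2)]
  have "dpi U X V < xi" using pa assms by blast
  moreover have "dpi U X Z \<le> dpi U X V + dpi U V Z" using tri[of U X V Z] u v assms XY ZY by auto
  ultimately show False using assms(4) u(4) xi_pos unfolding prec_def by linarith
qed

lemma pd: assumes "U \<in> T" "V \<in> T" "W \<in> T" "U \<noteq> V" "V \<noteq> W" "U \<noteq> W" "prec U V" "prec V W"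
  shows "prec U W"
proof (rule ccontr)
  assume n: "\<not> prec U W"
  note u = Tf[OF assms(1)] and v = Tf[OF assms(2)] and w = Tf[OF assms(3)]
  have "prec W U" using pb[of W U] n assms by blast
  then have 1: "dpi U X W < xi" using pa[of U W] assms by blast
  have 2: "dpi V X U < xi" using pa[of V U] assms by blast
  have 3: "dpi V W Z < xi" using assms(8) unfolding prec_def .
  have 4: "dpi U V Z < xi" using assms(7) unfolding prec_def .
  have "dpi V X Z \<le> dpi V X U + dpi V U Z" using tri[of V X U Z] u v w assms XY ZY by auto
  moreover have "dpi V U Z \<le> dpi V U W + dpi V W Z" using tri[of V U W Z] u v w assms XY ZY by auto
  ultimately have "dpi V U W > 2*xi" using 2 3 v(4) by linarith
  moreover have "dpi V W U = dpi V U W" using sym[of V W U] u v w assms by auto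
  ultimately have 5: "dpi U W V < xi" using beh[of W V U] u v w assms xi_pos by force
  have "dpi U X Z \<le> dpi U X W + dpi U W Z" using tri[of U X W Z] u v w assms XY ZY by auto
  moreover have "dpi U W Z \<le> dpi U W V + dpi U V Z" using tri[of U W V Z] u v w assms XY ZY by auto
  ultimately show False using 1 4 5 u(4) xi_pos by linarith
qed

lemma XT: "X \<notin> T" "Z \<notin> T" using Tf by auto

lemma lin: "linear_order_on S R"
proof -
  have sub: "R \<subseteq> S \<times> S" unfolding R_def by auto
  have refl: "refl_on S R" unfolding refl_on_def R_def by auto
  have tr: "trans R"
  proof (rule transI)
    fix U V W assume h: "(U,V) \<in> R" "(V,W) \<in> R"
    show "(U,W) \<in> R"
    proof (cases "U = V \<or> V = W \<or> U = X \<or> W = Z \<or> U = W")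
      case True then show ?thesis using h unfolding R_def by auto
    next
      case False
      have vz: "V \<noteq> Z" using h(2) False XZ XT unfolding R_def by auto
      have a: "U \<in> T" "V \<in> T" "prec U V" using h(1) False vz XZ XT unfolding R_def by auto
      have b: "V \<in> T" "W \<in> T" "prec V W" using h(2) False XZ XT a unfolding R_def by auto
      show ?thesis using pd[of U V W] a b False unfolding R_def by auto
    qed
  qed
  have anti: "antisym R"
  proof (rule antisymI)
    fix U V assume h: "(U,V) \<in> R" "(V,U) \<in> R"
    show "U = V"
    proof (rule ccontr)
      assume ne: "U \<noteq> V"
      show False using h ne XZ XT pc[of U V] unfolding R_def by auto
    qed
  qed
  have tot: "total_on S R"
    unfolding total_on_def R_def using pb XZ XT by auto
  show ?thesis unfolding linear_order_on_def partial_order_on_def preorder_on_def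
    using sub refl tr anti tot by blast
qed

lemma SYs: "U \<in> S \<Longrightarrow> U \<in> Ys" using Tf XY ZY by auto

lemma Lb: assumes "Y1 \<in> T" "V \<in> S" "V \<noteq> Y1" "(V, Y1) \<in> R" "V \<noteq> X" shows "dpi Y1 X V < xi" "V \<noteq> Z"
proof -
  have "V \<in> T \<and> prec V Y1" using assms XT unfolding R_def by auto
  then show "dpi Y1 X V < xi" using pa[of Y1 V] assms by auto
  show "V \<noteq> Z" using assms XT XZ unfolding R_def by auto
qed

lemma Rb: assumes "Y1 \<in> T" "V \<in> S" "V \<noteq> Y1" "(Y1, V) \<in> R" "V \<noteq> Z" shows "dpi Y1 V Z < xi" "V \<noteq> X"
proof -
  have "V \<in> T \<and> prec Y1 V" using assms XT unfolding R_def by auto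
  then show "dpi Y1 V Z < xi" unfolding prec_def by auto
  show "V \<noteq> X" using assms XT XZ unfolding R_def by auto
qed

lemma tot': "V \<in> S \<Longrightarrow> Y1 \<in> S \<Longrightarrow> V \<noteq> Y1 \<Longrightarrow> (V, Y1) \<in> R \<or> (Y1, V) \<in> R"
  using lin unfolding linear_order_on_def total_on_def by blast

lemma upper: assumes "Y0 \<in> S" "Y1 \<in> T" "Y2 \<in> S" "Y1 \<noteq> Y0" "Y1 \<noteq> Y2" "Y0 \<noteq> Y2"
  shows "d Y1 Y0 Y2 \<le> d Y1 X Z"
proof (rule mono)
  show "good X Z Y0" "good X Z Y2" using assms good_T SYs unfolding good_def by auto
qed (use assms Tf XY ZY in auto)

lemma betw: assumes "Y0 \<in> S" "Y1 \<in> T" "Y2 \<in> S" "Y1 \<noteq> Y0" "Y1 \<noteq> Y2" "Y0 \<noteq> Y2"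
  "(Y0, Y1) \<in> R" "(Y1, Y2) \<in> R"
  shows "d Y1 X Z - 4*xi \<le> d Y1 Y0 Y2"
proof -
  note y1 = Tf[OF assms(2)]
  have m: "Y0 \<in> Ys" "Y2 \<in> Ys" using SYs[OF assms(1)] SYs[OF assms(3)] by auto
  have ne: "Y0 \<noteq> Y1" "Y2 \<noteq> Y1" "X \<noteq> Y1" "Z \<noteq> Y1" using assms(4,5) y1(2,3) by auto
  have xi: "xi > 0" by (rule xi_pos)
  have k: "dpi Y1 X Z \<le> dpi Y1 Y0 Y2 + 2*xi"
  proof (cases "Y0 = X")
    case True
    show ?thesis
    proof (cases "Y2 = Z")
      case True2: True
      then show ?thesis unfolding True using xi by simp
    next
      case False
      have 1: "dpi Y1 Y2 Z < xi" using Rb(1)[OF assms(2) assms(3) ne(2) assms(8) False] .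
      have 2: "dpi Y1 X Z \<le> dpi Y1 X Y2 + dpi Y1 Y2 Z"
        by (rule tri[OF y1(1) XY m(2) ZY ne(3) ne(2) ne(4)])
      show ?thesis unfolding True using 1 2 xi by linarith
    qed
  next
    case False
    have a: "dpi Y1 X Y0 < xi" using Lb(1)[OF assms(2) assms(1) ne(1) assms(7) False] .
    have b: "dpi Y1 X Z \<le> dpi Y1 X Y0 + dpi Y1 Y0 Z"
      by (rule tri[OF y1(1) XY m(1) ZY ne(3) ne(1) ne(4)])
    show ?thesis
    proof (cases "Y2 = Z")
      case True
      show ?thesis unfolding True using a b xi by linarith
    next
      case False
      have 1: "dpi Y1 Y2 Z < xi" using Rb(1)[OF assms(2) assms(3) ne(2) assms(8) False] .
      have 2: "dpi Y1 Y0 Z \<le> dpi Y1 Y0 Y2 + dpi Y1 Y2 Z"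
        by (rule tri[OF y1(1) m(1) m(2) ZY ne(1) ne(2) ne(4)])
      show ?thesis using a b 1 2 by linarith
    qed
  qed
  have "dpi Y1 Y0 Y2 - 2*xi \<le> d Y1 Y0 Y2" using B[OF y1(1) m(1) m(2) assms(4) assms(5)] .
  moreover have "d Y1 X Z \<le> dpi Y1 X Z" using d_le[OF y1(1) XY ZY] y1(2,3) by auto
  ultimately show ?thesis using k by linarith
qed

lemma side: assumes "Y0 \<in> S" "Y1 \<in> T" "Y2 \<in> S" "Y1 \<noteq> Y0" "Y1 \<noteq> Y2" "Y0 \<noteq> Y2"
  "((Y0, Y1) \<in> R \<and> (Y2, Y1) \<in> R) \<or> ((Y1, Y0) \<in> R \<and> (Y1, Y2) \<in> R)"
  shows "d Y1 Y0 Y2 \<le> 4*xi"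
proof -
  note y1 = Tf[OF assms(2)]
  have m: "Y0 \<in> Ys" "Y2 \<in> Ys" using SYs[OF assms(1)] SYs[OF assms(3)] by auto
  have ne: "Y0 \<noteq> Y1" "Y2 \<noteq> Y1" "X \<noteq> Y1" "Z \<noteq> Y1" using assms(4,5) y1(2,3) by auto
  have xi: "xi > 0" by (rule xi_pos)
  have S1: "dpi Y1 Y0 Y2 = dpi Y1 Y2 Y0" "dpi Y1 X Y0 = dpi Y1 Y0 X" "dpi Y1 Y0 Z = dpi Y1 Z Y0"
    "dpi Y1 Z Y2 = dpi Y1 Y2 Z"
    using sym[OF y1(1) m(1) m(2) ne(1) ne(2)] sym[OF y1(1) XY m(1) ne(3) ne(1)]
      sym[OF y1(1) m(1) ZY ne(1) ne(4)] sym[OF y1(1) ZY m(2) ne(4) ne(2)] by auto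
  have "dpi Y1 Y0 Y2 < 2*xi"
    using assms(7)
  proof
    assume h: "(Y0, Y1) \<in> R \<and> (Y2, Y1) \<in> R"
    show ?thesis
    proof (cases "Y0 = X")
      case True
      have "Y2 \<noteq> X" using True assms(6) by auto
      then have "dpi Y1 X Y2 < xi" using Lb(1)[OF assms(2) assms(3) ne(2)] h by blast
      then show ?thesis unfolding True using xi by linarith
    next
      case F0: False
      have a: "dpi Y1 X Y0 < xi" using Lb(1)[OF assms(2) assms(1) ne(1)] h F0 by blast
      show ?thesis
      proof (cases "Y2 = X")
        case True
        show ?thesis unfolding True using a S1 xi by linarith
      next
        case False
        have b: "dpi Y1 X Y2 < xi" using Lb(1)[OF assms(2) assms(3) ne(2)] h False by blast
        have "dpi Y1 Y0 Y2 \<le> dpi Y1 Y0 X + dpi Y1 X Y2"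
          by (rule tri[OF y1(1) m(1) XY m(2) ne(1) ne(3) ne(2)])
        then show ?thesis using a b S1 by linarith
      qed
    qed
  next
    assume h: "(Y1, Y0) \<in> R \<and> (Y1, Y2) \<in> R"
    show ?thesis
    proof (cases "Y0 = Z")
      case True
      have "Y2 \<noteq> Z" using True assms(6) by auto
      then have "dpi Y1 Y2 Z < xi" using Rb(1)[OF assms(2) assms(3) ne(2)] h by blast
      then show ?thesis unfolding True using xi S1 by linarith
    next
      case F0: False
      have a: "dpi Y1 Y0 Z < xi" using Rb(1)[OF assms(2) assms(1) ne(1)] h F0 by blast
      show ?thesis
      proof (cases "Y2 = Z")
        case True
        show ?thesis unfolding True using a xi by linarith
      next
        case False
        have b: "dpi Y1 Y2 Z < xi" using Rb(1)[OF assms(2) assms(3) ne(2)] h False by blast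
        have "dpi Y1 Y0 Y2 \<le> dpi Y1 Y0 Z + dpi Y1 Z Y2"
          by (rule tri[OF y1(1) m(1) ZY m(2) ne(1) ne(4) ne(2)])
        then show ?thesis using a b S1 by linarith
      qed
    qed
  qed
  moreover have "d Y1 Y0 Y2 \<le> dpi Y1 Y0 Y2" using d_le[OF y1(1) m(1) m(2) assms(4) assms(5)] .
  ultimately show ?thesis using xi by linarith
qed

lemma G: "\<exists>R. linear_order_on S R \<and>
             (\<forall>U\<in>S. (X, U) \<in> R \<and> (U, Z) \<in> R) \<and>
             (\<forall>Y0\<in>S. \<forall>Y1\<in>S. \<forall>Y2\<in>S.
                Y1 \<notin> {X, Z} \<and> Y1 \<noteq> Y0 \<and> Y1 \<noteq> Y2 \<and> Y0 \<noteq> Y2 \<longrightarrow>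
                (if ((Y0, Y1) \<in> R \<and> (Y1, Y2) \<in> R) \<or> ((Y2, Y1) \<in> R \<and> (Y1, Y0) \<in> R)
                 then d Y1 X Z - 4*xi \<le> d Y1 Y0 Y2 \<and> d Y1 Y0 Y2 \<le> d Y1 X Z
                 else d Y1 Y0 Y2 \<le> 4*xi))"
proof (intro exI[of _ R] conjI ballI impI)
  show "linear_order_on S R" by (rule lin)
next
  fix U assume "U \<in> S" then show "(X, U) \<in> R" "(U, Z) \<in> R" unfolding R_def by auto
next
  fix Y0 Y1 Y2 assume h: "Y0 \<in> S" "Y1 \<in> S" "Y2 \<in> S" "Y1 \<notin> {X, Z} \<and> Y1 \<noteq> Y0 \<and> Y1 \<noteq> Y2 \<and> Y0 \<noteq> Y2"
  then have y1: "Y1 \<in> T" by auto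
  have m: "Y0 \<in> Ys" "Y2 \<in> Ys" "Y1 \<in> Ys" using SYs h by auto
  show "if ((Y0, Y1) \<in> R \<and> (Y1, Y2) \<in> R) \<or> ((Y2, Y1) \<in> R \<and> (Y1, Y0) \<in> R)
                 then d Y1 X Z - 4*xi \<le> d Y1 Y0 Y2 \<and> d Y1 Y0 Y2 \<le> d Y1 X Z
                 else d Y1 Y0 Y2 \<le> 4*xi"
  proof (cases "((Y0, Y1) \<in> R \<and> (Y1, Y2) \<in> R) \<or> ((Y2, Y1) \<in> R \<and> (Y1, Y0) \<in> R)")
    case True
    have up: "d Y1 Y0 Y2 \<le> d Y1 X Z" using upper[of Y0 Y1 Y2] h y1 by auto
    have "d Y1 X Z - 4*xi \<le> d Y1 Y0 Y2"
      using True
    proof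
      assume "(Y0, Y1) \<in> R \<and> (Y1, Y2) \<in> R" then show ?thesis using betw[of Y0 Y1 Y2] h y1 by auto
    next
      assume "(Y2, Y1) \<in> R \<and> (Y1, Y0) \<in> R"
      then have "d Y1 X Z - 4*xi \<le> d Y1 Y2 Y0" using betw[of Y2 Y1 Y0] h y1 by auto
      then show ?thesis using dsym[of Y1 Y2 Y0] m h by auto
    qed
    then show ?thesis using True up by simp
  next
    case False
    have "(Y0, Y1) \<in> R \<or> (Y1, Y0) \<in> R" "(Y2, Y1) \<in> R \<or> (Y1, Y2) \<in> R"
      using tot'[of Y0 Y1] tot'[of Y2 Y1] h by auto
    then have "((Y0, Y1) \<in> R \<and> (Y2, Y1) \<in> R) \<or> ((Y1, Y0) \<in> R \<and> (Y1, Y2) \<in> R)"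
      using False by blast
    then show ?thesis using side[of Y0 Y1 Y2] h y1 False by auto
  qed
qed

end

context PA begin

lemma main: "(let d = dmod Ys dpi xi in
       \<comment> \<open>(A)\<close>
       (\<forall>X\<in>Ys. \<forall>Y\<in>Ys. \<forall>Z\<in>Ys. X \<noteq> Y \<and> Y \<noteq> Z \<and> X \<noteq> Z \<longrightarrow>
          d Y X Z = d Y Z X) \<and>
       \<comment> \<open>(B)\<close>
       (\<forall>X\<in>Ys. \<forall>Y\<in>Ys. \<forall>Z\<in>Ys. X \<noteq> Y \<and> Y \<noteq> Z \<and> X \<noteq> Z \<longrightarrow>
          dpi Y X Z - (4*xi) \<le> d Y X Z \<and> d Y X Z \<le> dpi Y X Z) \<and>
       \<comment> \<open>(C)\<close>
       (\<forall>X\<in>Ys. \<forall>Y\<in>Ys. \<forall>Z\<in>Ys. \<forall>W\<in>Ys. distinct [X, Y, Z, W] \<longrightarrow>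
          d Y X Z + d Y Z W \<ge> d Y X W - (4*xi)) \<and>
       \<comment> \<open>(D)\<close>
       (\<forall>X\<in>Ys. \<forall>Y\<in>Ys. \<forall>Z\<in>Ys. X \<noteq> Y \<and> Y \<noteq> Z \<and> X \<noteq> Z \<longrightarrow>
          min (d Y X Z) (d Z X Y) \<le> (4*xi)) \<and>
       \<comment> \<open>(E)\<close>
       (\<forall>X\<in>Ys. \<forall>Z\<in>Ys. X \<noteq> Z \<longrightarrow> finite {Y \<in> Ys - {X, Z}. d Y X Z \<ge> (4*xi)}) \<and>
       \<comment> \<open>(F)\<close>
       (\<forall>X\<in>Ys. \<forall>Y\<in>Ys. \<forall>Z\<in>Ys. \<forall>W\<in>Ys. distinct [X, Y, Z, W] \<longrightarrow>
          d Y X Z \<ge> (4*xi) \<longrightarrow> d W X Y \<le> d W X Z \<and> d W Z Y \<le> d W X Z) \<and>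
       \<comment> \<open>(G)\<close>
       (\<forall>X\<in>Ys. \<forall>Z\<in>Ys. X \<noteq> Z \<longrightarrow>
          (let S = Yset Ys dpi xi (4*xi) X Z \<union> {X, Z} in
           \<exists>R. linear_order_on S R \<and>
             (\<forall>U\<in>S. (X, U) \<in> R \<and> (U, Z) \<in> R) \<and>
             (\<forall>Y0\<in>S. \<forall>Y1\<in>S. \<forall>Y2\<in>S.
                Y1 \<notin> {X, Z} \<and> Y1 \<noteq> Y0 \<and> Y1 \<noteq> Y2 \<and> Y0 \<noteq> Y2 \<longrightarrow>
                (if ((Y0, Y1) \<in> R \<and> (Y1, Y2) \<in> R) \<or> ((Y2, Y1) \<in> R \<and> (Y1, Y0) \<in> R)
                 then d Y1 X Z - (4*xi) \<le> d Y1 Y0 Y2 \<and> d Y1 Y0 Y2 \<le> d Y1 X Z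
                 else d Y1 Y0 Y2 \<le> (4*xi))))) \<and>
       \<comment> \<open>(H)\<close>
       (\<forall>X0\<in>Ys. \<forall>X1\<in>Ys. \<forall>Z\<in>Ys. \<forall>Y\<in>Ys.
          X0 \<noteq> X1 \<and> Y \<in> Yset Ys dpi xi (4*xi) X0 Z \<and> Y \<in> Yset Ys dpi xi (4*xi) X1 Z \<and>
          Z \<noteq> X0 \<and> Z \<noteq> X1 \<longrightarrow> d Z X0 X1 < (4*xi)))"
  unfolding Let_def
  apply (intro conjI)
  subgoal proof (intro ballI impI)
    fix X Y Z assume h: "X \<in> Ys" "Y \<in> Ys" "Z \<in> Ys" "X \<noteq> Y \<and> Y \<noteq> Z \<and> X \<noteq> Z"
    show "d Y X Z = d Y Z X" using dsym[of Y X Z] h by auto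
  qed
  subgoal proof (intro ballI impI conjI)
    fix X Y Z assume h: "X \<in> Ys" "Y \<in> Ys" "Z \<in> Ys" "X \<noteq> Y \<and> Y \<noteq> Z \<and> X \<noteq> Z"
    show "dpi Y X Z - 4*xi \<le> d Y X Z" using B[of Y X Z] h xi_pos by auto
    show "d Y X Z \<le> dpi Y X Z" using d_le[of Y X Z] h by auto
  qed
  subgoal proof (intro ballI impI)
    fix X Y Z W assume h: "X \<in> Ys" "Y \<in> Ys" "Z \<in> Ys" "W \<in> Ys" "distinct [X, Y, Z, W]"
    have ne: "X \<noteq> Y" "Z \<noteq> Y" "W \<noteq> Y" using h(5) by auto
    have "d Y X W \<le> dpi Y X W" using d_le[OF h(2) h(1) h(4)] ne by auto
    moreover have "dpi Y X W \<le> dpi Y X Z + dpi Y Z W" by (rule tri[OF h(2) h(1) h(3) h(4) ne])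
    moreover have "dpi Y X Z - 2*xi \<le> d Y X Z" using B[OF h(2) h(1) h(3)] ne by auto
    moreover have "dpi Y Z W - 2*xi \<le> d Y Z W" using B[OF h(2) h(3) h(4)] ne by auto
    ultimately show "d Y X Z + d Y Z W \<ge> d Y X W - 4*xi" by linarith
  qed
  subgoal proof (intro ballI impI)
    fix X Y Z assume h: "X \<in> Ys" "Y \<in> Ys" "Z \<in> Ys" "X \<noteq> Y \<and> Y \<noteq> Z \<and> X \<noteq> Z"
    have "dpi Y X Z < xi \<or> dpi Z X Y < xi" using beh[OF h(1) h(2) h(3)] h(4) by auto
    moreover have "d Y X Z \<le> dpi Y X Z" using d_le[of Y X Z] h by auto
    moreover have "d Z X Y \<le> dpi Z X Y" using d_le[of Z X Y] h by auto
    ultimately show "min (d Y X Z) (d Z X Y) \<le> 4*xi" using xi_pos by linarith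
  qed
  subgoal proof (intro ballI impI)
    fix X Z assume h: "X \<in> Ys" "Z \<in> Ys" "X \<noteq> Z"
    have "{Y \<in> Ys - {X, Z}. d Y X Z \<ge> 4*xi} \<subseteq> {Y \<in> Ys - {X, Z}. dpi Y X Z \<ge> xi}"
    proof
      fix Y assume "Y \<in> {Y \<in> Ys - {X, Z}. d Y X Z \<ge> 4*xi}"
      then have y: "Y \<in> Ys" "Y \<noteq> X" "Y \<noteq> Z" "d Y X Z \<ge> 4*xi" by auto
      then have "d Y X Z \<le> dpi Y X Z" using d_le[OF y(1) h(1) h(2)] by auto
      then show "Y \<in> {Y \<in> Ys - {X, Z}. dpi Y X Z \<ge> xi}" using y xi_pos by auto
    qed
    then show "finite {Y \<in> Ys - {X, Z}. d Y X Z \<ge> 4*xi}" using fin[OF h(1) h(2)] finite_subset by blast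
  qed
  subgoal proof (intro ballI impI conjI)
    fix X Y Z W assume h: "X \<in> Ys" "Y \<in> Ys" "Z \<in> Ys" "W \<in> Ys" "distinct [X, Y, Z, W]"
      and g: "d Y X Z \<ge> 4*xi"
    have gY: "good X Z Y" unfolding good_def using h(2) g xi_pos by auto
    have gX: "good X Z X" "good X Z Z" unfolding good_def using h by auto
    show "d W X Y \<le> d W X Z" by (rule mono[OF gX(1) gY]) (use h in auto)
    show "d W Z Y \<le> d W X Z" by (rule mono[OF gX(2) gY]) (use h in auto)
  qed
  subgoal apply (intro ballI impI)
    subgoal premises h for X Z
    proof -
      interpret PAXZ Ys dpi xi X Z by (unfold_locales; fact h(1) h(2) h(3))
      show ?thesis using G by simp
    qed
    done
  subgoal proof (intro ballI impI)
    fix X0 X1 Z Y assume h: "X0 \<in> Ys" "X1 \<in> Ys" "Z \<in> Ys" "Y \<in> Ys"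
      "X0 \<noteq> X1 \<and> Y \<in> Yset Ys dpi xi (4*xi) X0 Z \<and> Y \<in> Yset Ys dpi xi (4*xi) X1 Z \<and>
          Z \<noteq> X0 \<and> Z \<noteq> X1"
    have y: "Y \<noteq> X0" "Y \<noteq> X1" "Y \<noteq> Z" "d Y X0 Z > 4*xi" "d Y X1 Z > 4*xi"
      using h(5) unfolding Yset_def by auto
    have "d Y X0 Z \<le> dpi Y X0 Z" "d Y X1 Z \<le> dpi Y X1 Z"
      using d_le[of Y X0 Z] d_le[of Y X1 Z] h y by auto
    then have "dpi Z X0 Y < xi" "dpi Z X1 Y < xi"
      using beh[of X0 Y Z] beh[of X1 Y Z] h y xi_pos by force+
    moreover have "dpi Z X0 X1 \<le> dpi Z X0 Y + dpi Z Y X1"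
      using tri[of Z X0 Y X1] h y by auto
    moreover have "dpi Z Y X1 = dpi Z X1 Y" using sym[of Z Y X1] h y by auto
    moreover have "d Z X0 X1 \<le> dpi Z X0 X1" using d_le[of Z X0 X1] h by auto
    ultimately show "d Z X0 X1 < 4*xi" using xi_pos by linarith
  qed
  done

end

theorem theorem2p3:
  fixes xi :: real
  assumes "xi > 0"
  shows "\<exists>bxi c :: real. bxi > 0 \<and> c > 0 \<and>
    (\<forall>(Ys :: 'a set) dpi. proj_axioms Ys dpi xi \<longrightarrow>
      (let d = dmod Ys dpi xi in
       \<comment> \<open>(A)\<close>
       (\<forall>X\<in>Ys. \<forall>Y\<in>Ys. \<forall>Z\<in>Ys. X \<noteq> Y \<and> Y \<noteq> Z \<and> X \<noteq> Z \<longrightarrow>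
          d Y X Z = d Y Z X) \<and>
       \<comment> \<open>(B)\<close>
       (\<forall>X\<in>Ys. \<forall>Y\<in>Ys. \<forall>Z\<in>Ys. X \<noteq> Y \<and> Y \<noteq> Z \<and> X \<noteq> Z \<longrightarrow>
          dpi Y X Z - c \<le> d Y X Z \<and> d Y X Z \<le> dpi Y X Z) \<and>
       \<comment> \<open>(C)\<close>
       (\<forall>X\<in>Ys. \<forall>Y\<in>Ys. \<forall>Z\<in>Ys. \<forall>W\<in>Ys. distinct [X, Y, Z, W] \<longrightarrow>
          d Y X Z + d Y Z W \<ge> d Y X W - c) \<and>
       \<comment> \<open>(D)\<close>
       (\<forall>X\<in>Ys. \<forall>Y\<in>Ys. \<forall>Z\<in>Ys. X \<noteq> Y \<and> Y \<noteq> Z \<and> X \<noteq> Z \<longrightarrow>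
          min (d Y X Z) (d Z X Y) \<le> c) \<and>
       \<comment> \<open>(E)\<close>
       (\<forall>X\<in>Ys. \<forall>Z\<in>Ys. X \<noteq> Z \<longrightarrow> finite {Y \<in> Ys - {X, Z}. d Y X Z \<ge> bxi}) \<and>
       \<comment> \<open>(F)\<close>
       (\<forall>X\<in>Ys. \<forall>Y\<in>Ys. \<forall>Z\<in>Ys. \<forall>W\<in>Ys. distinct [X, Y, Z, W] \<longrightarrow>
          d Y X Z \<ge> bxi \<longrightarrow> d W X Y \<le> d W X Z \<and> d W Z Y \<le> d W X Z) \<and>
       \<comment> \<open>(G)\<close>
       (\<forall>X\<in>Ys. \<forall>Z\<in>Ys. X \<noteq> Z \<longrightarrow>
          (let S = Yset Ys dpi xi bxi X Z \<union> {X, Z} in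
           \<exists>R. linear_order_on S R \<and>
             (\<forall>U\<in>S. (X, U) \<in> R \<and> (U, Z) \<in> R) \<and>
             (\<forall>Y0\<in>S. \<forall>Y1\<in>S. \<forall>Y2\<in>S.
                Y1 \<notin> {X, Z} \<and> Y1 \<noteq> Y0 \<and> Y1 \<noteq> Y2 \<and> Y0 \<noteq> Y2 \<longrightarrow>
                (if ((Y0, Y1) \<in> R \<and> (Y1, Y2) \<in> R) \<or> ((Y2, Y1) \<in> R \<and> (Y1, Y0) \<in> R)
                 then d Y1 X Z - c \<le> d Y1 Y0 Y2 \<and> d Y1 Y0 Y2 \<le> d Y1 X Z
                 else d Y1 Y0 Y2 \<le> c)))) \<and>
       \<comment> \<open>(H)\<close>
       (\<forall>X0\<in>Ys. \<forall>X1\<in>Ys. \<forall>Z\<in>Ys. \<forall>Y\<in>Ys.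
          X0 \<noteq> X1 \<and> Y \<in> Yset Ys dpi xi bxi X0 Z \<and> Y \<in> Yset Ys dpi xi bxi X1 Z \<and>
          Z \<noteq> X0 \<and> Z \<noteq> X1 \<longrightarrow> d Z X0 X1 < bxi)))"
  apply (intro exI[of _ "4*xi"] conjI allI impI)
  using assms apply simp
  using assms apply simp
  apply (rule PA.main[OF PA.intro])
  apply assumption
  done

end
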